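(* Let $\mathscr{X},\mathscr{Y},\mathscr{Z}$ be real Banach spaces with duals $\mathscr{X}^*,\mathscr{Y}^*,\mathscr{Z}^*$, let $A:\mathscr{X}\to\mathscr{Y}$ and $B:\mathscr{X}\to\mathscr{Z}$ be bounded linear operators with adjoints $A^*,B^*$, let $\mathbf{y}_0\in\mathscr{Y}$ and $\rho>0$. Then $$\inf\{\|\mathbf{y}_0-A\mathbf{x}\|_{\mathscr{Y}}+\rho\|B\mathbf{x}\|_{\mathscr{Z}}:\mathbf{x}\in\mathscr{X}\}=\sup\{|\langle\mathbf{y}_0,\lambda\rangle_{\mathscr{Y}}|:\ \lambda\in\mathscr{Y}^*,\ \mu\in\mathscr{Z}^*,\ \max\{\|\lambda\|_{\mathscr{Y}^*},\|\mu\|_{\mathscr{Z}^*}\}\le1,\ A^*\lambda+\rho B^*\mu=0\}.$$ Moreover, if $p,p'\in(1,+\infty)$ with $1/p+1/p'=1$, then $$\inf\{(\|\mathbf{y}_0-A\mathbf{x}\|^p_{\mathscr{Y}}+\rho\|B\mathbf{x}\|^p_{\mathscr{Z}})^{1/p}:\mathbf{x}\in\mathscr{X}\}=\sup\{|\langle\mathbf{y}_0,\lambda\rangle_{\mathscr{Y}}|:\ \lambda\in\mathscr{Y}^*,\ \mu\in\mathscr{Z}^*,\ (\|\lambda\|^{p'}_{\mathscr{Y}^*}+\|\mu\|^{p'}_{\mathscr{Z}^*})^{1/p'}\le1,\ A^*\lambda+\rho^{1/p}B^*\mu=0\}.$$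
   Context: $\langle\mathbf{y},\lambda\rangle_{\mathscr{Y}}:=\lambda(\mathbf{y})$ for $\mathbf{y}\in\mathscr{Y}$, $\lambda\in\mathscr{Y}^*$. *)

theory Defs
  imports "HOL-Analysis.Analysis"
begin

(* Dual space of a real normed space 'a: bounded linear functionals 'a \<Rightarrow>\<^sub>L real,
  with the operator norm. *)

definition pairing :: "'a::real_normed_vector \<Rightarrow> ('a \<Rightarrow>\<^sub>L real) \<Rightarrow> real" where
  "pairing y l = blinfun_apply l y"

definition adjoint_op :: "('a::real_normed_vector \<Rightarrow>\<^sub>L 'b::real_normed_vector)
    \<Rightarrow> ('b \<Rightarrow>\<^sub>L real) \<Rightarrow> ('a \<Rightarrow>\<^sub>L real)" where
  "adjoint_op T l = l o\<^sub>L T"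

end

theory Submission
  imports Defs
begin


definition sublin :: "('a::real_vector \<Rightarrow> real) \<Rightarrow> bool" where
  "sublin q \<longleftrightarrow> (\<forall>x y. q (x + y) \<le> q x + q y) \<and> (\<forall>c x. 0 < c \<longrightarrow> q (c *\<^sub>R x) \<le> c * q x)"

lemma sublinD1: "sublin q \<Longrightarrow> q (x + y) \<le> q x + q y"
  by (simp add: sublin_def)
lemma sublinD2: "sublin q \<Longrightarrow> 0 < c \<Longrightarrow> q (c *\<^sub>R x) \<le> c * q x"
  by (simp add: sublin_def)

lemma sublin_0: assumes "sublin q" shows "q 0 = 0"
proof -
  have "q 0 \<le> q 0 + q 0" using sublinD1[OF assms, of 0 0] by simp
  moreover have "q ((1/2) *\<^sub>R 0) \<le> (1/2) * q 0" using sublinD2[OF assms, of "1/2" 0] by simp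
  ultimately show ?thesis by simp
qed

lemma sublin_hom: assumes "sublin q" "0 < c" shows "q (c *\<^sub>R x) = c * q x"
proof -
  have "q x = q (inverse c *\<^sub>R (c *\<^sub>R x))" using assms by simp
  also have "\<dots> \<le> inverse c * q (c *\<^sub>R x)" using sublinD2[OF assms(1), of "inverse c" "c *\<^sub>R x"] assms(2) by simp
  finally have "c * q x \<le> q (c *\<^sub>R x)" using assms(2) by (simp add: field_simps)
  thus ?thesis using sublinD2[OF assms, of x] by linarith
qed

lemma sublin_hom0: assumes "sublin q" "0 \<le> c" shows "q (c *\<^sub>R x) = c * q x"
  using assms sublin_hom[OF assms(1)] sublin_0[OF assms(1)] by (cases "c = 0") auto

lemma sublin_neg: assumes "sublin q" shows "- q (- x) \<le> q x"
  using sublinD1[OF assms, of x "-x"] sublin_0[OF assms] by simp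

definition shift :: "('a::real_vector \<Rightarrow> real) \<Rightarrow> 'a \<Rightarrow> 'a \<Rightarrow> real" where
  "shift q u x = Inf ((\<lambda>t. q (x + t *\<^sub>R u) - t * q u) ` {0..})"

lemma shift_bdd1: assumes "sublin q" "0 \<le> t" shows "- q (- x) \<le> q (x + t *\<^sub>R u) - t * q u"
proof -
  have "t * q u = q (t *\<^sub>R u)" using sublin_hom0[OF assms] by simp
  also have "\<dots> = q ((x + t *\<^sub>R u) + (-x))" by simp
  also have "\<dots> \<le> q (x + t *\<^sub>R u) + q (-x)" by (rule sublinD1[OF assms(1)])
  finally show ?thesis by simp
qed

lemma shift_bdd: assumes "sublin q" shows "bdd_below ((\<lambda>t. q (x + t *\<^sub>R u) - t * q u) ` {0..})"
  using shift_bdd1[OF assms] by (auto intro!: bdd_belowI[where m = "- q (- x)"])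

lemma shift_le: assumes "sublin q" "0 \<le> t" shows "shift q u x \<le> q (x + t *\<^sub>R u) - t * q u"
  unfolding shift_def using assms by (intro cInf_lower shift_bdd) auto

lemma shift_ge: assumes "sublin q" "\<And>t. 0 \<le> t \<Longrightarrow> c \<le> q (x + t *\<^sub>R u) - t * q u" shows "c \<le> shift q u x"
  unfolding shift_def using assms by (intro cInf_greatest) auto

lemma shift_le_q: "sublin q \<Longrightarrow> shift q u x \<le> q x"
  using shift_le[of q 0 u x] by simp

lemma shift_sublin: assumes "sublin q" shows "sublin (shift q u)"
  unfolding sublin_def
proof (intro conjI allI impI)
  fix x y
  have "shift q u (x + y) - (q (y + t *\<^sub>R u) - t * q u) \<le> shift q u x" if t: "0 \<le> t" for t
  proof (rule shift_ge[OF assms])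
    fix s :: real assume s: "0 \<le> s"
    have "shift q u (x + y) \<le> q ((x + y) + (s + t) *\<^sub>R u) - (s + t) * q u"
      using shift_le[OF assms] s t by simp
    also have "q ((x + y) + (s + t) *\<^sub>R u) \<le> q (x + s *\<^sub>R u) + q (y + t *\<^sub>R u)"
      using sublinD1[OF assms, of "x + s *\<^sub>R u" "y + t *\<^sub>R u"] by (simp add: algebra_simps)
    finally show "shift q u (x + y) - (q (y + t *\<^sub>R u) - t * q u) \<le> q (x + s *\<^sub>R u) - s * q u"
      by (simp add: algebra_simps)
  qed
  hence "shift q u (x + y) - shift q u x \<le> shift q u y"
    by (intro shift_ge[OF assms]) (auto simp: algebra_simps)
  thus "shift q u (x + y) \<le> shift q u x + shift q u y" by simp
next
  fix c :: real and x :: 'a assume c: "0 < c"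
  have "shift q u (c *\<^sub>R x) / c \<le> shift q u x"
  proof (rule shift_ge[OF assms])
    fix t :: real assume t: "0 \<le> t"
    have "shift q u (c *\<^sub>R x) \<le> q (c *\<^sub>R x + (c * t) *\<^sub>R u) - (c * t) * q u"
      using shift_le[OF assms] c t by simp
    also have "q (c *\<^sub>R x + (c * t) *\<^sub>R u) = c * q (x + t *\<^sub>R u)"
      using sublin_hom[OF assms c, of "x + t *\<^sub>R u"] by (simp add: algebra_simps)
    finally show "shift q u (c *\<^sub>R x) / c \<le> q (x + t *\<^sub>R u) - t * q u"
      using c by (simp add: field_simps)
  qed
  thus "shift q u (c *\<^sub>R x) \<le> c * shift q u x" using c by (simp add: field_simps)
qed

definition epi :: "('a \<Rightarrow> real) \<Rightarrow> ('a \<times> real) set" where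
  "epi q = {(x, r). q x < r}"

lemma epi_sub: "epi q2 \<subseteq> epi q1 \<longleftrightarrow> (\<forall>x. q1 x \<le> q2 x)"
proof
  assume h: "epi q2 \<subseteq> epi q1"
  show "\<forall>x. q1 x \<le> q2 x"
  proof
    fix x
    have "q1 x < q2 x + e" if "e > 0" for e
    proof -
      have "(x, q2 x + e) \<in> epi q2" using that by (simp add: epi_def)
      hence "(x, q2 x + e) \<in> epi q1" using h by blast
      thus ?thesis by (simp add: epi_def)
    qed
    thus "q1 x \<le> q2 x" by (metis add.right_neutral add_le_cancel_left field_le_epsilon less_imp_le)
  qed
qed (fastforce simp: epi_def intro: le_less_trans)

lemma exists_minimal:
  fixes p :: "'a::real_vector \<Rightarrow> real"
  assumes p: "sublin p"
  shows "\<exists>q. sublin q \<and> (\<forall>x. q x \<le> p x) \<and> (\<forall>r. sublin r \<and> (\<forall>x. r x \<le> q x) \<longrightarrow> (\<forall>x. q x \<le> r x))"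
proof -
  define A where "A = epi ` {q. sublin q \<and> (\<forall>x. q x \<le> p x)}"
  have "\<forall>C\<in>chains A. \<exists>U\<in>A. \<forall>X\<in>C. X \<subseteq> U"
  proof
    fix C assume C: "C \<in> chains A"
    show "\<exists>U\<in>A. \<forall>X\<in>C. X \<subseteq> U"
    proof (cases "C = {}")
      case True
      then show ?thesis using p unfolding A_def by auto
    next
      case False
      define Q where "Q = {q. sublin q \<and> (\<forall>x. q x \<le> p x) \<and> epi q \<in> C}"
      have CA: "C \<subseteq> A" using C by (simp add: chains_def)
      have Cch: "\<forall>X\<in>C. \<forall>Y\<in>C. X \<subseteq> Y \<or> Y \<subseteq> X" using C by (simp add: chains_def chain_subset_def)
      have Qne: "Q \<noteq> {}" using False CA unfolding Q_def A_def by blast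
      have Qch: "(\<forall>x. q1 x \<le> q2 x) \<or> (\<forall>x. q2 x \<le> q1 x)" if "q1 \<in> Q" "q2 \<in> Q" for q1 q2
      proof -
        have "epi q1 \<in> C" "epi q2 \<in> C" using that unfolding Q_def by auto
        hence "epi q1 \<subseteq> epi q2 \<or> epi q2 \<subseteq> epi q1" using Cch by blast
        thus ?thesis unfolding epi_sub by blast
      qed
      define r where "r x = Inf ((\<lambda>q. q x) ` Q)" for x
      have bdd: "bdd_below ((\<lambda>q. q x) ` Q)" for x
      proof (rule bdd_belowI[where m = "- p (- x)"])
        fix v assume "v \<in> (\<lambda>q. q x) ` Q"
        then obtain q where q: "q \<in> Q" "v = q x" by auto
        have "- q (- x) \<le> q x" using q sublin_neg unfolding Q_def by blast
        moreover have "q (- x) \<le> p (- x)" using q unfolding Q_def by blast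
        ultimately show "- p (- x) \<le> v" using q by simp
      qed
      have rle: "r x \<le> q x" if "q \<in> Q" for q x
        unfolding r_def using that bdd by (intro cInf_lower) auto
      have rge: "c \<le> r x" if "\<And>q. q \<in> Q \<Longrightarrow> c \<le> q x" for c x
        unfolding r_def using that Qne by (intro cInf_greatest) auto
      have rless: "\<exists>q\<in>Q. q x < c" if "r x < c" for x c
        using that Qne bdd unfolding r_def by (simp add: cInf_less_iff)
      have rsub: "sublin r"
        unfolding sublin_def
      proof (intro conjI allI impI)
        fix x y
        show "r (x + y) \<le> r x + r y"
        proof (rule ccontr)
          assume nt: "\<not> ?thesis"
          define d where "d = r (x + y) - r x - r y"
          have d: "d > 0" using nt unfolding d_def by simp
          obtain q1 where q1: "q1 \<in> Q" "q1 x < r x + d/2" using rless[of x "r x + d/2"] d by auto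
          obtain q2 where q2: "q2 \<in> Q" "q2 y < r y + d/2" using rless[of y "r y + d/2"] d by auto
          obtain qm where qm: "qm \<in> Q" "qm x \<le> q1 x" "qm y \<le> q2 y"
            using Qch[OF q1(1) q2(1)] q1 q2 by (metis order_refl)
          have "r (x + y) \<le> qm (x + y)" by (rule rle[OF qm(1)])
          also have "\<dots> \<le> qm x + qm y" using qm(1) sublinD1 unfolding Q_def by blast
          finally have "r (x + y) \<le> qm x + qm y" .
          thus False using qm(2,3) q1(2) q2(2) d_def [[show_types, show_sorts]] by linarith
        qed
      next
        fix c :: real and x :: 'a assume c: "0 < c"
        have "r (c *\<^sub>R x) / c \<le> r x"
        proof (rule rge)
          fix q assume q: "q \<in> Q"
          have "r (c *\<^sub>R x) \<le> q (c *\<^sub>R x)" by (rule rle[OF q])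
          also have "\<dots> \<le> c * q x" using q sublinD2 c unfolding Q_def by blast
          finally show "r (c *\<^sub>R x) / c \<le> q x" using c by (simp add: field_simps)
        qed
        thus "r (c *\<^sub>R x) \<le> c * r x" using c by (simp add: field_simps)
      qed
      obtain q0 where "q0 \<in> Q" using Qne by auto
      have rp: "r x \<le> p x" for x
      proof -
        have "q0 x \<le> p x" using \<open>q0 \<in> Q\<close> unfolding Q_def by blast
        thus ?thesis using rle[OF \<open>q0 \<in> Q\<close>, of x] by linarith
      qed
      have "epi r \<in> A" unfolding A_def using rsub rp by auto
      moreover have "X \<subseteq> epi r" if XC: "X \<in> C" for X
      proof -
        obtain q where q: "X = epi q" "sublin q" "\<forall>x. q x \<le> p x" using XC CA unfolding A_def by auto
        hence "q \<in> Q" using XC unfolding Q_def by auto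
        thus ?thesis using q(1) rle epi_sub by blast
      qed
      ultimately show ?thesis by blast
    qed
  qed
  from Zorn_Lemma2[OF this] obtain M where M: "M \<in> A" "\<forall>X\<in>A. M \<subseteq> X \<longrightarrow> X = M" by blast
  then obtain q where q: "M = epi q" "sublin q" "\<forall>x. q x \<le> p x" unfolding A_def by auto
  show ?thesis
  proof (intro exI conjI allI impI)
    show "sublin q" "\<And>x. q x \<le> p x" using q by auto
    fix r x assume r: "sublin r \<and> (\<forall>x. r x \<le> q x)"
    hence "epi r \<in> A" using q unfolding A_def by (auto intro: order_trans)
    moreover have "M \<subseteq> epi r" using r q(1) epi_sub by blast
    ultimately have "epi r = epi q" using M q(1) by auto
    thus "q x \<le> r x" using epi_sub by (metis order_refl)
  qed
qed

lemma minimal_linear: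
  assumes q: "sublin q" and minq: "\<forall>r. sublin r \<and> (\<forall>x. r x \<le> q x) \<longrightarrow> (\<forall>x. q x \<le> r x)"
  shows "linear q"
proof -
  have add: "q (x + u) = q x + q u" for x u
  proof -
    have "q x \<le> shift q u x" using minq shift_sublin[OF q] shift_le_q[OF q] by blast
    also have "\<dots> \<le> q (x + 1 *\<^sub>R u) - 1 * q u" by (rule shift_le[OF q]) simp
    finally show ?thesis using sublinD1[OF q, of x u] by simp
  qed
  have neg: "q (- x) = - q x" for x using add[of x "-x"] sublin_0[OF q] by simp
  have sc: "q (c *\<^sub>R x) = c * q x" for c x
  proof (cases "c \<ge> 0")
    case True then show ?thesis using sublin_hom0[OF q] by simp
  next
    case False
    hence h: "q ((-c) *\<^sub>R x) = (-c) * q x" using sublin_hom0[OF q, of "-c" x] by simp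
    have "q (c *\<^sub>R x) = q (- ((-c) *\<^sub>R x))" by simp
    also have "\<dots> = - q ((-c) *\<^sub>R x)" by (rule neg)
    finally show ?thesis using h by simp
  qed
  show ?thesis by (rule linearI) (use add sc in auto)
qed

lemma hahn_banach_sublin:
  assumes p: "sublin p"
  shows "\<exists>F. linear F \<and> (\<forall>x. F x \<le> p x) \<and> F w0 = p w0"
proof -
  obtain q where q: "sublin q" "\<forall>x. q x \<le> shift p w0 x"
    "\<forall>r. sublin r \<and> (\<forall>x. r x \<le> q x) \<longrightarrow> (\<forall>x. q x \<le> r x)"
    using exists_minimal[OF shift_sublin[OF p]] by blast
  have lin: "linear q" using minimal_linear q by blast
  have le: "q x \<le> p x" for x using q(2) shift_le_q[OF p] order_trans by blast
  have "q (- w0) \<le> p (- w0 + 1 *\<^sub>R w0) - 1 * p w0"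
    using q(2) shift_le[OF p, of 1 w0 "- w0"] by (meson order_trans zero_le_one)
  hence "p w0 \<le> q w0" using sublin_0[OF p] linear_neg[OF lin, of w0] by simp
  thus ?thesis using lin le[of w0] le by (intro exI[of _ q]) auto
qed



definition Np :: "real \<Rightarrow> real \<Rightarrow> real \<Rightarrow> real" where
  "Np p a b = (a powr p + b powr p) powr (1 / p)"

lemma Np_nonneg: "0 \<le> Np p a b" by (simp add: Np_def)

lemma Np_pow: assumes "p > 0" "0 \<le> a" "0 \<le> b" shows "Np p a b powr p = a powr p + b powr p"
  using assms by (simp add: Np_def powr_powr)

lemma Np_zero: assumes "p > 0" "0 \<le> a" "0 \<le> b" "Np p a b = 0" shows "a = 0 \<and> b = 0"
proof -
  have "a powr p + b powr p = 0" using assms by (simp add: Np_def)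
  hence "a powr p = 0" "b powr p = 0" by (smt (verit) powr_ge_zero)+
  thus ?thesis by simp
qed

lemma holder2:
  assumes pq: "p > 1" "q > 1" "1/p + 1/q = 1" and nn: "0 \<le> s" "0 \<le> t" "0 \<le> a" "0 \<le> b"
  shows "s * a + t * b \<le> Np q s t * Np p a b"
proof (cases "Np q s t = 0 \<or> Np p a b = 0")
  case True
  then show ?thesis using Np_zero[of q s t] Np_zero[of p a b] pq nn by auto
next
  case False
  define S where "S = Np q s t"
  define T where "T = Np p a b"
  have S: "S > 0" and T: "T > 0" using False Np_nonneg unfolding S_def T_def by (auto simp: order_less_le)
  have y1: "(s / S) * (a / T) \<le> (a / T) powr p / p + (s / S) powr q / q"
    using Youngs_inequality[OF pq, of "a / T" "s / S"] nn S T by (simp add: mult.commute)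
  have y2: "(t / S) * (b / T) \<le> (b / T) powr p / p + (t / S) powr q / q"
    using Youngs_inequality[OF pq, of "b / T" "t / S"] nn S T by (simp add: mult.commute)
  have Sq: "S powr q = s powr q + t powr q" unfolding S_def using Np_pow pq nn by simp
  have Tp: "T powr p = a powr p + b powr p" unfolding T_def using Np_pow pq nn by simp
  have "(a / T) powr p + (b / T) powr p = 1"
    using T by (simp add: powr_divide add_divide_distrib[symmetric] flip: Tp)
  moreover have "(s / S) powr q + (t / S) powr q = 1"
    using S by (simp add: powr_divide add_divide_distrib[symmetric] flip: Sq)
  ultimately have e: "((a / T) powr p + (b / T) powr p) / p + ((s / S) powr q + (t / S) powr q) / q = 1 / p + 1 / q"
    by simp
  have "(s / S) * (a / T) + (t / S) * (b / T) \<le> ((a / T) powr p / p + (s / S) powr q / q) + ((b / T) powr p / p + (t / S) powr q / q)"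
    by (rule add_mono[OF y1 y2])
  also have "\<dots> = ((a / T) powr p + (b / T) powr p) / p + ((s / S) powr q + (t / S) powr q) / q"
    by (simp add: add_divide_distrib)
  finally have "(s / S) * (a / T) + (t / S) * (b / T) \<le> 1" using e pq by simp
  moreover have "(s * a + t * b) / (S * T) = (s / S) * (a / T) + (t / S) * (b / T)"
    by (simp add: add_divide_distrib)
  ultimately have "(s * a + t * b) / (S * T) \<le> 1" by simp
  thus ?thesis using S T unfolding S_def[symmetric] T_def[symmetric] by (simp add: divide_le_eq)
qed

lemma holder2_eq:
  assumes pq: "p > 1" "q > 1" "1/p + 1/q = 1" and nn: "0 \<le> a" "0 \<le> b"
  shows "\<exists>s t. 0 \<le> s \<and> 0 \<le> t \<and> Np q s t \<le> 1 \<and> s * a + t * b = Np p a b"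
proof (cases "Np p a b = 0")
  case True
  then show ?thesis using pq by (intro exI[of _ 0]) (auto simp: Np_def)
next
  case False
  define T where "T = Np p a b"
  have T: "T > 0" using False Np_nonneg unfolding T_def by (auto simp: order_less_le)
  have Tp: "T powr p = a powr p + b powr p" unfolding T_def using Np_pow pq nn by simp
  have pq': "(p - 1) * q = p" using pq by (simp add: field_simps)
  define s where "s = (a / T) powr (p - 1)"
  define t where "t = (b / T) powr (p - 1)"
  have sq: "s powr q = (a / T) powr p" unfolding s_def by (simp add: powr_powr pq')
  have tq: "t powr q = (b / T) powr p" unfolding t_def by (simp add: powr_powr pq')
  have sum1: "(a / T) powr p + (b / T) powr p = 1"
    using T by (simp add: powr_divide add_divide_distrib[symmetric] flip: Tp)
  have "Np q s t = 1" unfolding Np_def sq tq sum1 by simp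
  moreover have sa: "s * a = T * (a / T) powr p"
  proof (cases "a = 0")
    case True then show ?thesis using pq by (simp add: s_def)
  next
    case False
    have "(a / T) powr p = (a / T) powr (p - 1) * (a / T) powr 1"
      by (metis powr_add diff_add_cancel)
    thus ?thesis using False nn T by (simp add: s_def)
  qed
  moreover have tb: "t * b = T * (b / T) powr p"
  proof (cases "b = 0")
    case True then show ?thesis using pq by (simp add: t_def)
  next
    case False
    have "(b / T) powr p = (b / T) powr (p - 1) * (b / T) powr 1"
      by (metis powr_add diff_add_cancel)
    thus ?thesis using False nn T by (simp add: t_def)
  qed
  ultimately show ?thesis
    using sum1 T nn unfolding T_def[symmetric]
    by (intro exI[of _ s] exI[of _ t]) (auto simp: s_def t_def simp flip: distrib_left)
qed



lemma lim1:
  fixes t b K :: real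
  assumes "\<And>c. c < b \<Longrightarrow> t * c \<le> K" "0 \<le> t"
  shows "t * b \<le> K"
proof (cases "t = 0")
  case True
  then show ?thesis using assms(1)[of "b - 1"] by simp
next
  case False
  hence t: "t > 0" using assms(2) by simp
  have "b \<le> K / t"
  proof (rule dense_le)
    fix c assume "c < b"
    thus "c \<le> K / t" using assms(1)[of c] t by (simp add: field_simps)
  qed
  thus ?thesis using t by (simp add: field_simps)
qed

lemma lim2:
  fixes s t a b K :: real
  assumes "\<And>c1 c2. c1 < a \<Longrightarrow> c2 < b \<Longrightarrow> s * c1 + t * c2 \<le> K" "0 \<le> s" "0 \<le> t"
  shows "s * a + t * b \<le> K"
proof -
  have "s * c1 \<le> K - t * b" if c1: "c1 < a" for c1
  proof -
    have "t * b \<le> K - s * c1"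
    proof (rule lim1)
      fix c2 assume "c2 < b"
      thus "t * c2 \<le> K - s * c1" using assms(1)[OF c1, of c2] by simp
    qed (use assms(3) in auto)
    thus ?thesis by simp
  qed
  hence "s * a \<le> K - t * b" by (rule lim1) (use assms in auto)
  thus ?thesis by simp
qed

lemma blinfun_approx:
  fixes l :: "'a::real_normed_vector \<Rightarrow>\<^sub>L real"
  assumes "c < norm l"
  shows "\<exists>y. norm y \<le> 1 \<and> c < blinfun_apply l y"
proof (rule ccontr)
  assume "\<not> ?thesis"
  hence h: "blinfun_apply l y \<le> c" if "norm y \<le> 1" for y using that by force
  have c0: "0 \<le> c" using h[of 0] by simp
  have b: "l y \<le> c * norm y" for y
  proof (cases "y = 0")
    case True then show ?thesis by simp
  next
    case False
    have "l ((1 / norm y) *\<^sub>R y) \<le> c" by (rule h) (use False in simp)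
    hence "(1 / norm y) * l y \<le> c" by (simp add: blinfun.scaleR_right)
    thus ?thesis using False by (simp add: field_simps)
  qed
  have "norm l \<le> c"
  proof (rule norm_blinfun_bound[OF c0])
    fix y
    have "l y \<le> c * norm y" by (rule b)
    moreover have "- l y \<le> c * norm y" using b[of "- y"] by (simp add: blinfun.minus_right)
    ultimately show "norm (blinfun_apply l y) \<le> c * norm y" by simp
  qed
  thus False using assms by simp
qed

lemma generic:
  fixes A :: "'x::real_normed_vector \<Rightarrow>\<^sub>L 'y::real_normed_vector"
    and B :: "'x \<Rightarrow>\<^sub>L 'z::real_normed_vector"
    and y0 :: 'y and c :: real and N :: "real \<Rightarrow> real \<Rightarrow> real"
  assumes Nmono: "\<And>a b a' b'. 0 \<le> a \<Longrightarrow> 0 \<le> b \<Longrightarrow> a \<le> a' \<Longrightarrow> b \<le> b' \<Longrightarrow> N a b \<le> N a' b'"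
    and Nadd: "\<And>a b a' b'. 0 \<le> a \<Longrightarrow> 0 \<le> b \<Longrightarrow> 0 \<le> a' \<Longrightarrow> 0 \<le> b' \<Longrightarrow> N (a + a') (b + b') \<le> N a b + N a' b'"
    and Nhom: "\<And>k a b. 0 \<le> k \<Longrightarrow> 0 \<le> a \<Longrightarrow> 0 \<le> b \<Longrightarrow> N (k * a) (k * b) = k * N a b"
  shows "Inf {N (norm (y0 - A x)) (norm (c *\<^sub>R B x)) | x. True}
       = Sup {\<bar>pairing y0 l\<bar> | l m. (\<forall>s t. 0 \<le> s \<longrightarrow> 0 \<le> t \<longrightarrow> s * norm l + t * norm m \<le> N s t)
                 \<and> adjoint_op A l + c *\<^sub>R adjoint_op B m = 0}"
    (is "Inf ?I = Sup ?S")
proof -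
  have N00: "N 0 0 = 0" using Nhom[of 0 0 0] by simp
  have Nnn: "0 \<le> N a b" if "0 \<le> a" "0 \<le> b" for a b using Nmono[of 0 0 a b] that N00 by simp
  define d where "d = Inf ?I"
  have Ine: "?I \<noteq> {}" by auto
  have d0: "0 \<le> d" unfolding d_def using Ine by (intro cInf_greatest) (auto intro!: Nnn)
  have weak: "v \<le> d" if vS: "v \<in> ?S" for v
  proof -
    obtain l m where lm: "v = \<bar>pairing y0 l\<bar>"
      "\<forall>s t. 0 \<le> s \<longrightarrow> 0 \<le> t \<longrightarrow> s * norm l + t * norm m \<le> N s t"
      "adjoint_op A l + c *\<^sub>R adjoint_op B m = 0" using vS by blast
    show ?thesis unfolding d_def
    proof (rule cInf_greatest[OF Ine])
      fix w assume "w \<in> ?I"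
      then obtain x where x: "w = N (norm (y0 - A x)) (norm (c *\<^sub>R B x))" by blast
      have "blinfun_apply (adjoint_op A l + c *\<^sub>R adjoint_op B m) x = 0" using lm(3) by simp
      hence adj: "l (A x) + c * m (B x) = 0" by (simp add: adjoint_op_def plus_blinfun.rep_eq scaleR_blinfun.rep_eq)
      have "l y0 = l (y0 - A x) - m (c *\<^sub>R B x)"
        using adj by (simp add: blinfun.diff_right blinfun.scaleR_right)
      hence "\<bar>l y0\<bar> \<le> \<bar>l (y0 - A x)\<bar> + \<bar>m (c *\<^sub>R B x)\<bar>" by linarith
      also have "\<dots> \<le> norm l * norm (y0 - A x) + norm m * norm (c *\<^sub>R B x)"
        by (intro add_mono) (metis norm_blinfun real_norm_def)+
      also have "\<dots> \<le> N (norm (y0 - A x)) (norm (c *\<^sub>R B x))"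
        using lm(2)[rule_format, of "norm (y0 - A x)" "norm (c *\<^sub>R B x)"] by (simp only: mult.commute norm_ge_zero simp_thms)
      finally show "v \<le> w" using lm(1) x by (simp add: pairing_def)
    qed
  qed
  \<comment> \<open>strong duality via Hahn-Banach\<close>
  define q :: "'y \<times> 'z \<Rightarrow> real" where "q w = N (norm (fst w)) (norm (snd w))" for w
  have qnn: "0 \<le> q w" for w unfolding q_def by (intro Nnn) auto
  have q0: "q 0 = 0" unfolding q_def using N00 by simp
  have qsub: "sublin q" unfolding sublin_def
  proof (intro conjI allI impI)
    fix w1 w2 :: "'y \<times> 'z"
    have "q (w1 + w2) \<le> N (norm (fst w1) + norm (fst w2)) (norm (snd w1) + norm (snd w2))"
      unfolding q_def by (intro Nmono) (auto intro: norm_triangle_ineq)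
    also have "\<dots> \<le> q w1 + q w2" unfolding q_def by (intro Nadd) auto
    finally show "q (w1 + w2) \<le> q w1 + q w2" .
  next
    fix k :: real and w :: "'y \<times> 'z" assume k: "0 < k"
    show "q (k *\<^sub>R w) \<le> k * q w" unfolding q_def using k Nhom[of k "norm (fst w)" "norm (snd w)"] by simp
  qed
  define M :: "'x \<Rightarrow> 'y \<times> 'z" where "M x = (A x, c *\<^sub>R B x)" for x
  have Madd: "M (x1 + x2) = M x1 + M x2" for x1 x2
    unfolding M_def by (simp add: blinfun.add_right scaleR_add_right)
  have Mscale: "M (k *\<^sub>R x) = k *\<^sub>R M x" for k x
    unfolding M_def by (simp add: blinfun.scaleR_right)
  have Mminus: "M (- x) = - M x" for x
    unfolding M_def by (simp add: blinfun.minus_right)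
  define pp where "pp w = Inf ((\<lambda>x. q (w - M x)) ` UNIV)" for w
  have ppbdd: "bdd_below ((\<lambda>x. q (w - M x)) ` UNIV)" for w
    by (rule bdd_belowI[where m = 0]) (auto intro: qnn)
  have pple: "pp w \<le> q (w - M x)" for w x unfolding pp_def by (rule cInf_lower[OF _ ppbdd]) auto
  have ppge: "v \<le> pp w" if "\<And>x. v \<le> q (w - M x)" for v w
    unfolding pp_def using that by (intro cInf_greatest) auto
  have ppsub: "sublin pp" unfolding sublin_def
  proof (intro conjI allI impI)
    fix w1 w2 :: "'y \<times> 'z"
    have "pp (w1 + w2) - q (w2 - M x2) \<le> pp w1" for x2
    proof (rule ppge)
      fix x1
      have "pp (w1 + w2) \<le> q ((w1 - M x1) + (w2 - M x2))"
        using pple[of "w1 + w2" "x1 + x2"] by (simp add: Madd algebra_simps)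
      also have "\<dots> \<le> q (w1 - M x1) + q (w2 - M x2)" by (rule sublinD1[OF qsub])
      finally show "pp (w1 + w2) - q (w2 - M x2) \<le> q (w1 - M x1)" by simp
    qed
    hence "pp (w1 + w2) - pp w1 \<le> pp w2" by (intro ppge) (auto simp: algebra_simps)
    thus "pp (w1 + w2) \<le> pp w1 + pp w2" by simp
  next
    fix k :: real and w :: "'y \<times> 'z" assume k: "0 < k"
    have "pp (k *\<^sub>R w) / k \<le> pp w"
    proof (rule ppge)
      fix x
      have "pp (k *\<^sub>R w) \<le> q (k *\<^sub>R w - M (k *\<^sub>R x))" by (rule pple)
      also have "\<dots> = k * q (w - M x)"
        using sublin_hom[OF qsub k, of "w - M x"] by (simp add: Mscale algebra_simps)
      finally show "pp (k *\<^sub>R w) / k \<le> q (w - M x)" using k by (simp add: field_simps)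
    qed
    thus "pp (k *\<^sub>R w) \<le> k * pp w" using k by (simp add: field_simps)
  qed
  define w0 :: "'y \<times> 'z" where "w0 = (y0, 0)"
  obtain F where F: "linear F" "\<And>w. F w \<le> pp w" "F w0 = pp w0"
    using hahn_banach_sublin[OF ppsub, of w0] by blast
  have M0: "M 0 = 0" unfolding M_def by (simp add: zero_prod_def)
  have Fq: "F w \<le> q w" for w using F(2)[of w] pple[of w 0] M0 by simp
  have "pp w0 = d"
  proof -
    have "?I = (\<lambda>x. q (w0 - M x)) ` UNIV"
      unfolding q_def w0_def M_def by (auto simp: norm_minus_cancel)
    thus ?thesis unfolding pp_def d_def by simp
  qed
  hence Fw0: "F w0 = d" using F(3) by simp
  have FM: "F (M x) = 0" for x
  proof -
    have "F (M x) \<le> 0" using F(2)[of "M x"] pple[of "M x" x] q0 by simp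
    moreover have "F (M (- x)) \<le> 0" using F(2)[of "M (- x)"] pple[of "M (- x)" "- x"] q0 by simp
    ultimately show ?thesis using linear_neg[OF F(1), of "M x"] Mminus[of x] by simp
  qed
  have Fadd: "F (u + v) = F u + F v" for u v using linear_add[OF F(1)] .
  have Fscale: "F (k *\<^sub>R u) = k * F u" for k u using linear_scale[OF F(1)] by simp
  have Fneg: "F (- u) = - F u" for u using linear_neg[OF F(1)] .
  have N10: "N r 0 = r * N 1 0" if "0 \<le> r" for r using Nhom[of r 1 0] that by simp
  have N01: "N 0 r = r * N 0 1" if "0 \<le> r" for r using Nhom[of r 0 1] that by simp
  have bl1: "bounded_linear (\<lambda>y. F (y, 0))"
  proof (rule bounded_linear_intro[where K = "N 1 0"])
    fix y1 y2 :: 'y show "F (y1 + y2, 0) = F (y1, 0) + F (y2, 0)" using Fadd[of "(y1, 0)" "(y2, 0)"] by simp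
  next
    fix k :: real and y :: 'y show "F (k *\<^sub>R y, 0) = k *\<^sub>R F (y, 0)" using Fscale[of k "(y, 0)"] by simp
  next
    fix y :: 'y
    have "F (y, 0) \<le> norm y * N 1 0" using Fq[of "(y, 0)"] N10[of "norm y"] by (simp add: q_def)
    moreover have "- F (y, 0) \<le> norm y * N 1 0" using Fq[of "(- y, 0)"] N10[of "norm y"] Fneg[of "(y, 0)"] by (simp add: q_def)
    ultimately show "norm (F (y, 0)) \<le> norm y * N 1 0" by simp
  qed
  have bl2: "bounded_linear (\<lambda>z. F (0, z))"
  proof (rule bounded_linear_intro[where K = "N 0 1"])
    fix y1 y2 :: 'z show "F (0, y1 + y2) = F (0, y1) + F (0, y2)" using Fadd[of "(0, y1)" "(0, y2)"] by simp
  next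
    fix k :: real and y :: 'z show "F (0, k *\<^sub>R y) = k *\<^sub>R F (0, y)" using Fscale[of k "(0, y)"] by simp
  next
    fix y :: 'z
    have "F (0, y) \<le> norm y * N 0 1" using Fq[of "(0, y)"] N01[of "norm y"] by (simp add: q_def)
    moreover have "- F (0, y) \<le> norm y * N 0 1" using Fq[of "(0, - y)"] N01[of "norm y"] Fneg[of "(0, y)"] by (simp add: q_def)
    ultimately show "norm (F (0, y)) \<le> norm y * N 0 1" by simp
  qed
  define l where "l = Blinfun (\<lambda>y. F (y, 0))"
  define m where "m = Blinfun (\<lambda>z. F (0, z))"
  have l_app: "blinfun_apply l y = F (y, 0)" for y unfolding l_def using bl1 by (simp add: bounded_linear_Blinfun_apply)
  have m_app: "blinfun_apply m z = F (0, z)" for z unfolding m_def using bl2 by (simp add: bounded_linear_Blinfun_apply)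
  have cond: "s * norm l + t * norm m \<le> N s t" if st: "0 \<le> s" "0 \<le> t" for s t
  proof (rule lim2[OF _ st])
    fix c1 c2 assume c: "c1 < norm l" "c2 < norm m"
    obtain y where y: "norm y \<le> 1" "c1 < l y" using blinfun_approx[OF c(1)] by blast
    obtain z where z: "norm z \<le> 1" "c2 < m z" using blinfun_approx[OF c(2)] by blast
    have "s * c1 + t * c2 \<le> s * l y + t * m z"
      using y z st by (intro add_mono mult_left_mono) auto
    also have "\<dots> = F (s *\<^sub>R y, t *\<^sub>R z)"
      using Fadd[of "(s *\<^sub>R y, 0)" "(0, t *\<^sub>R z)"] Fscale[of s "(y, 0)"] Fscale[of t "(0, z)"]
      by (simp add: l_app m_app)
    also have "\<dots> \<le> q (s *\<^sub>R y, t *\<^sub>R z)" by (rule Fq)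
    also have "\<dots> = N (s * norm y) (t * norm z)" using st by (simp add: q_def)
    also have "\<dots> \<le> N s t" using st y z by (intro Nmono) (auto simp: mult_left_le)
    finally show "s * c1 + t * c2 \<le> N s t" .
  qed
  have adj: "adjoint_op A l + c *\<^sub>R adjoint_op B m = 0"
  proof (rule blinfun_eqI)
    fix x
    have "blinfun_apply (adjoint_op A l + c *\<^sub>R adjoint_op B m) x = F (A x, 0) + c * F (0, B x)"
      by (simp add: adjoint_op_def l_app m_app plus_blinfun.rep_eq scaleR_blinfun.rep_eq)
    also have "\<dots> = F (M x)"
      using Fadd[of "(A x, 0)" "(0, c *\<^sub>R B x)"] Fscale[of c "(0, B x)"] by (simp add: M_def)
    also have "\<dots> = 0" by (rule FM)
    finally show "blinfun_apply (adjoint_op A l + c *\<^sub>R adjoint_op B m) x = blinfun_apply 0 x" by simp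
  qed
  have "\<bar>pairing y0 l\<bar> = d" using Fw0 d0 by (simp add: pairing_def l_app w0_def)
  hence dS: "d \<in> ?S" using cond adj by blast
  have "Sup ?S = d" by (rule cSup_eq_maximum[OF dS weak])
  thus ?thesis unfolding d_def by simp
qed


lemma cond1:
  fixes a b :: real assumes "0 \<le> a" "0 \<le> b"
  shows "max a b \<le> 1 \<longleftrightarrow> (\<forall>s t. 0 \<le> s \<longrightarrow> 0 \<le> t \<longrightarrow> s * a + t * b \<le> s + t)"
proof
  assume h: "max a b \<le> 1"
  show "\<forall>s t. 0 \<le> s \<longrightarrow> 0 \<le> t \<longrightarrow> s * a + t * b \<le> s + t"
  proof (intro allI impI)
    fix s t :: real assume st: "0 \<le> s" "0 \<le> t"
    have "s * a \<le> s * 1" "t * b \<le> t * 1" using h st by (intro mult_left_mono; simp)+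
    thus "s * a + t * b \<le> s + t" by simp
  qed
next
  assume h: "\<forall>s t. 0 \<le> s \<longrightarrow> 0 \<le> t \<longrightarrow> s * a + t * b \<le> s + t"
  show "max a b \<le> 1" using h[rule_format, of 1 0] h[rule_format, of 0 1] by simp
qed

lemma condp:
  fixes a b :: real assumes pq: "1 < p" "1 < q" "1 / p + 1 / q = 1" and nn: "0 \<le> a" "0 \<le> b"
  shows "(a powr q + b powr q) powr (1 / q) \<le> 1 \<longleftrightarrow> (\<forall>s t. 0 \<le> s \<longrightarrow> 0 \<le> t \<longrightarrow> s * a + t * b \<le> Np p s t)"
proof
  assume h: "(a powr q + b powr q) powr (1 / q) \<le> 1"
  show "\<forall>s t. 0 \<le> s \<longrightarrow> 0 \<le> t \<longrightarrow> s * a + t * b \<le> Np p s t"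
  proof (intro allI impI)
    fix s t :: real assume st: "0 \<le> s" "0 \<le> t"
    have "a * s + b * t \<le> Np q a b * Np p s t" by (rule holder2[OF pq nn st])
    also have "\<dots> \<le> 1 * Np p s t" using h by (intro mult_right_mono) (auto simp: Np_def)
    finally show "s * a + t * b \<le> Np p s t" by (simp add: mult.commute)
  qed
next
  assume h: "\<forall>s t. 0 \<le> s \<longrightarrow> 0 \<le> t \<longrightarrow> s * a + t * b \<le> Np p s t"
  have pq': "1 / q + 1 / p = 1" using pq by simp
  obtain s t where st: "0 \<le> s" "0 \<le> t" "Np p s t \<le> 1" "s * a + t * b = Np q a b"
    using holder2_eq[OF pq(2,1) pq' nn] by blast
  have "Np q a b \<le> Np p s t" using h[rule_format, OF st(1,2)] st(4) by simp
  thus "(a powr q + b powr q) powr (1 / q) \<le> 1" using st(3) by (simp add: Np_def)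
qed

lemma Np_props:
  assumes pq: "1 < p" "1 < q" "1 / p + 1 / q = 1"
  shows "\<And>a b a' b'. 0 \<le> a \<Longrightarrow> 0 \<le> b \<Longrightarrow> a \<le> a' \<Longrightarrow> b \<le> b' \<Longrightarrow> Np p a b \<le> Np p a' b'"
    and "\<And>a b a' b'. 0 \<le> a \<Longrightarrow> 0 \<le> b \<Longrightarrow> 0 \<le> a' \<Longrightarrow> 0 \<le> b' \<Longrightarrow> Np p (a + a') (b + b') \<le> Np p a b + Np p a' b'"
    and "\<And>k a b. 0 \<le> k \<Longrightarrow> 0 \<le> a \<Longrightarrow> 0 \<le> b \<Longrightarrow> Np p (k * a) (k * b) = k * Np p a b"
proof -
  fix a b a' b' :: real assume h: "0 \<le> a" "0 \<le> b" "a \<le> a'" "b \<le> b'"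
  show "Np p a b \<le> Np p a' b'" unfolding Np_def using pq h
    by (intro powr_mono2 add_mono) auto
next
  fix a b a' b' :: real assume h: "0 \<le> a" "0 \<le> b" "0 \<le> a'" "0 \<le> b'"
  obtain s t where st: "0 \<le> s" "0 \<le> t" "Np q s t \<le> 1" "s * (a + a') + t * (b + b') = Np p (a + a') (b + b')"
    using holder2_eq[OF pq, of "a + a'" "b + b'"] h by auto
  have "Np p (a + a') (b + b') = (s * a + t * b) + (s * a' + t * b')" using st(4) by (simp add: algebra_simps)
  also have "\<dots> \<le> Np q s t * Np p a b + Np q s t * Np p a' b'"
    using holder2[OF pq] st h by (intro add_mono) auto
  also have "\<dots> \<le> 1 * Np p a b + 1 * Np p a' b'"
    using st(3) by (intro add_mono mult_right_mono) (auto simp: Np_nonneg)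
  finally show "Np p (a + a') (b + b') \<le> Np p a b + Np p a' b'" by simp
next
  fix k a b :: real assume h: "0 \<le> k" "0 \<le> a" "0 \<le> b"
  have "(k * a) powr p + (k * b) powr p = k powr p * (a powr p + b powr p)"
    by (simp add: powr_mult algebra_simps)
  hence "Np p (k * a) (k * b) = (k powr p) powr (1 / p) * (a powr p + b powr p) powr (1 / p)"
    by (simp add: Np_def powr_mult)
  also have "(k powr p) powr (1 / p) = k" using pq h by (simp add: powr_powr)
  finally show "Np p (k * a) (k * b) = k * Np p a b" by (simp add: Np_def)
qed

theorem theorem3p4:
  fixes A :: "'x::banach \<Rightarrow>\<^sub>L 'y::banach"
    and B :: "'x \<Rightarrow>\<^sub>L 'z::banach"
    and y0 :: 'y
    and \<rho> :: real
  assumes "\<rho> > 0"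
  shows "Inf {norm (y0 - A x) + \<rho> * norm (B x) | x. True}
           = Sup {\<bar>pairing y0 l\<bar> | l m.
                    max (norm l) (norm m) \<le> 1 \<and>
                    adjoint_op A l + \<rho> *\<^sub>R adjoint_op B m = 0}
       \<and> (\<forall>p p' :: real. 1 < p \<and> 1 < p' \<and> 1 / p + 1 / p' = 1 \<longrightarrow>
            Inf {(norm (y0 - A x) powr p + \<rho> * norm (B x) powr p) powr (1 / p) | x. True}
              = Sup {\<bar>pairing y0 l\<bar> | l m.
                    (norm l powr p' + norm m powr p') powr (1 / p') \<le> 1 \<and>
                    adjoint_op A l + (\<rho> powr (1 / p)) *\<^sub>R adjoint_op B m = 0})"
proof (intro conjI allI impI)
  have g: "Inf {(\<lambda>a b. a + b) (norm (y0 - A x)) (norm (\<rho> *\<^sub>R B x)) | x. True}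
       = Sup {\<bar>pairing y0 l\<bar> | l m. (\<forall>s t. 0 \<le> s \<longrightarrow> 0 \<le> t \<longrightarrow> s * norm l + t * norm m \<le> (\<lambda>a b. a + b) s t)
                 \<and> adjoint_op A l + \<rho> *\<^sub>R adjoint_op B m = 0}"
    by (rule generic) (auto simp: algebra_simps)
  have e1: "{norm (y0 - A x) + \<rho> * norm (B x) | x. True} = {(\<lambda>a b. a + b) (norm (y0 - A x)) (norm (\<rho> *\<^sub>R B x)) | x. True}"
    using assms by simp
  have e2: "{\<bar>pairing y0 l\<bar> | l m. max (norm l) (norm m) \<le> 1 \<and> adjoint_op A l + \<rho> *\<^sub>R adjoint_op B m = 0}
     = {\<bar>pairing y0 l\<bar> | l m. (\<forall>s t. 0 \<le> s \<longrightarrow> 0 \<le> t \<longrightarrow> s * norm l + t * norm m \<le> (\<lambda>a b. a + b) s t)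
                 \<and> adjoint_op A l + \<rho> *\<^sub>R adjoint_op B m = 0}"
    by (simp only: cond1[OF norm_ge_zero norm_ge_zero])
  show "Inf {norm (y0 - A x) + \<rho> * norm (B x) | x. True}
           = Sup {\<bar>pairing y0 l\<bar> | l m.
                    max (norm l) (norm m) \<le> 1 \<and>
                    adjoint_op A l + \<rho> *\<^sub>R adjoint_op B m = 0}"
    unfolding e1 e2 by (rule g)
next
  fix p p' :: real assume pq: "1 < p \<and> 1 < p' \<and> 1 / p + 1 / p' = 1"
  hence pq1: "1 < p" "1 < p'" "1 / p + 1 / p' = 1" by auto
  define c where "c = \<rho> powr (1 / p)"
  have g: "Inf {Np p (norm (y0 - A x)) (norm (c *\<^sub>R B x)) | x. True}
       = Sup {\<bar>pairing y0 l\<bar> | l m. (\<forall>s t. 0 \<le> s \<longrightarrow> 0 \<le> t \<longrightarrow> s * norm l + t * norm m \<le> Np p s t)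
                 \<and> adjoint_op A l + c *\<^sub>R adjoint_op B m = 0}"
    by (rule generic) (use Np_props[OF pq1] in auto)
  have cp: "c powr p = \<rho>" unfolding c_def using assms pq1 by (simp add: powr_powr)
  have n: "norm (c *\<^sub>R B x) powr p = \<rho> * norm (B x) powr p" for x
  proof -
    have "norm (c *\<^sub>R B x) = c * norm (B x)" unfolding c_def by simp
    moreover have "0 \<le> c" unfolding c_def by simp
    ultimately show ?thesis using cp by (simp add: powr_mult)
  qed
  have e1: "{(norm (y0 - A x) powr p + \<rho> * norm (B x) powr p) powr (1 / p) | x. True}
     = {Np p (norm (y0 - A x)) (norm (c *\<^sub>R B x)) | x. True}"
    by (simp only: Np_def n)
  have e2: "{\<bar>pairing y0 l\<bar> | l m. (norm l powr p' + norm m powr p') powr (1 / p') \<le> 1 \<and>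
                    adjoint_op A l + c *\<^sub>R adjoint_op B m = 0}
     = {\<bar>pairing y0 l\<bar> | l m. (\<forall>s t. 0 \<le> s \<longrightarrow> 0 \<le> t \<longrightarrow> s * norm l + t * norm m \<le> Np p s t)
                 \<and> adjoint_op A l + c *\<^sub>R adjoint_op B m = 0}"
    by (simp only: condp[OF pq1 norm_ge_zero norm_ge_zero])
  show "Inf {(norm (y0 - A x) powr p + \<rho> * norm (B x) powr p) powr (1 / p) | x. True}
              = Sup {\<bar>pairing y0 l\<bar> | l m.
                    (norm l powr p' + norm m powr p') powr (1 / p') \<le> 1 \<and>
                    adjoint_op A l + (\<rho> powr (1 / p)) *\<^sub>R adjoint_op B m = 0}"
    unfolding c_def[symmetric] e1 e2 by (rule g)
qed

end
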